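(* Let $\varphi$ be a continuous Archimedean t-norm, $A^{+}=(a^{+}_{ij}),A^{-}=(a^{-}_{ij})\in[0,1]^{m\times n}$, $b\in[0,1]^m$, and let $I_j$, $S'_{ij}$ be as in the context. Let $i\in\{1,\dots,m\}$, $j\in\{1,\dots,n\}$ with $S'_{ij}\neq\varnothing$. Then $I_j$ is a nonempty closed interval $[L_j,U_j]$ and $S'_{ij}$ is one of the sets $\{L_j\}$, $\{U_j\}$, $\{L_j,U_j\}$, $[L_j,U_j]$.
   Context: A t-norm is a binary operation on $[0,1]$ that is commutative, associative, nondecreasing in each argument and has $1$ as neutral element; a continuous t-norm $\varphi$ is Archimedean if $\varphi(x,x)<x$ for all $x\in(0,1)$. For $i\in\mathscr{I}=\{1,\dots,m\}$, $j\in\mathscr{J}=\{1,\dots,n\}$: $S_{ij}=\{t\in[0,1]:\max\{\varphi(a^{+}_{ij},t),\varphi(a^{-}_{ij},1-t)\}=b_i\}$, $I_{ij}=\{t\in[0,1]:\max\{\varphi(a^{+}_{ij},t),\varphi(a^{-}_{ij},1-t)\}\le b_i\}$, $I_j=\bigcap_{i\in\mathscr{I}}I_{ij}$, and $S'_{ij}=S_{ij}\cap I_j$. *)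

theory Defs
  imports "HOL-Analysis.Analysis"
begin

text \<open>A t-norm on the unit interval [0,1], with the operation modelled as a real function
  whose behaviour is only constrained on [0,1].\<close>
definition tnorm :: "(real \<Rightarrow> real \<Rightarrow> real) \<Rightarrow> bool" where
  "tnorm T \<longleftrightarrow>
     (\<forall>x\<in>{0..1}. \<forall>y\<in>{0..1}. T x y \<in> {0..1}) \<and>
     (\<forall>x\<in>{0..1}. \<forall>y\<in>{0..1}. T x y = T y x) \<and>
     (\<forall>x\<in>{0..1}. \<forall>y\<in>{0..1}. \<forall>z\<in>{0..1}. T x (T y z) = T (T x y) z) \<and>
     (\<forall>x\<in>{0..1}. \<forall>y\<in>{0..1}. \<forall>z\<in>{0..1}. y \<le> z \<longrightarrow> T x y \<le> T x z) \<and>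
     (\<forall>x\<in>{0..1}. T x 1 = x)"

definition continuous_archimedean_tnorm :: "(real \<Rightarrow> real \<Rightarrow> real) \<Rightarrow> bool" where
  "continuous_archimedean_tnorm T \<longleftrightarrow>
     tnorm T \<and>
     continuous_on ({0..1} \<times> {0..1}) (\<lambda>p. T (fst p) (snd p)) \<and>
     (\<forall>x\<in>{0<..<1}. T x x < x)"

text \<open>Indices i range over {1..m}, j over {1..n}.\<close>
definition S_set :: "(real \<Rightarrow> real \<Rightarrow> real) \<Rightarrow> (nat \<Rightarrow> nat \<Rightarrow> real) \<Rightarrow> (nat \<Rightarrow> nat \<Rightarrow> real)
    \<Rightarrow> (nat \<Rightarrow> real) \<Rightarrow> nat \<Rightarrow> nat \<Rightarrow> real set" where
  "S_set T Ap Am b i j = {t\<in>{0..1}. max (T (Ap i j) t) (T (Am i j) (1 - t)) = b i}"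

definition I_set :: "(real \<Rightarrow> real \<Rightarrow> real) \<Rightarrow> (nat \<Rightarrow> nat \<Rightarrow> real) \<Rightarrow> (nat \<Rightarrow> nat \<Rightarrow> real)
    \<Rightarrow> (nat \<Rightarrow> real) \<Rightarrow> nat \<Rightarrow> nat \<Rightarrow> real set" where
  "I_set T Ap Am b i j = {t\<in>{0..1}. max (T (Ap i j) t) (T (Am i j) (1 - t)) \<le> b i}"

definition Ij_set :: "(real \<Rightarrow> real \<Rightarrow> real) \<Rightarrow> (nat \<Rightarrow> nat \<Rightarrow> real) \<Rightarrow> (nat \<Rightarrow> nat \<Rightarrow> real)
    \<Rightarrow> (nat \<Rightarrow> real) \<Rightarrow> nat \<Rightarrow> nat \<Rightarrow> real set" where
  "Ij_set T Ap Am b m j = (\<Inter>i\<in>{1..m}. I_set T Ap Am b i j)"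

definition S'_set :: "(real \<Rightarrow> real \<Rightarrow> real) \<Rightarrow> (nat \<Rightarrow> nat \<Rightarrow> real) \<Rightarrow> (nat \<Rightarrow> nat \<Rightarrow> real)
    \<Rightarrow> (nat \<Rightarrow> real) \<Rightarrow> nat \<Rightarrow> nat \<Rightarrow> nat \<Rightarrow> real set" where
  "S'_set T Ap Am b m i j = S_set T Ap Am b i j \<inter> Ij_set T Ap Am b m j"

end

theory Submission
  imports Defs
begin

lemma tn_range: "tnorm T \<Longrightarrow> x \<in> {0..1} \<Longrightarrow> y \<in> {0..1} \<Longrightarrow> T x y \<in> {0..1}"
  unfolding tnorm_def by blast
lemma tn_comm: "tnorm T \<Longrightarrow> x \<in> {0..1} \<Longrightarrow> y \<in> {0..1} \<Longrightarrow> T x y = T y x"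
  unfolding tnorm_def by blast
lemma tn_assoc: "tnorm T \<Longrightarrow> x \<in> {0..1} \<Longrightarrow> y \<in> {0..1} \<Longrightarrow> z \<in> {0..1} \<Longrightarrow> T x (T y z) = T (T x y) z"
  unfolding tnorm_def by blast
lemma tn_mono: "tnorm T \<Longrightarrow> x \<in> {0..1} \<Longrightarrow> y \<in> {0..1} \<Longrightarrow> z \<in> {0..1} \<Longrightarrow> y \<le> z \<Longrightarrow> T x y \<le> T x z"
  unfolding tnorm_def by blast
lemma tn_one: "tnorm T \<Longrightarrow> x \<in> {0..1} \<Longrightarrow> T x 1 = x"
  unfolding tnorm_def by blast

lemma tn_zero: assumes "tnorm T" "x \<in> {0..1}" shows "T 0 x = 0"
proof -
  have "T 0 x \<le> T 0 1" using tn_mono[OF assms(1), of 0 x 1] assms(2) by auto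
  moreover have "T 0 1 = 0" using tn_one[OF assms(1), of 0] by auto
  moreover have "T 0 x \<ge> 0" using tn_range[OF assms(1), of 0 x] assms(2) by auto
  ultimately show ?thesis by linarith
qed

lemma tn_zero2: assumes "tnorm T" "x \<in> {0..1}" shows "T x 0 = 0"
  using tn_zero[OF assms] tn_comm[OF assms(1) assms(2), of 0] by auto

lemma cont2:
  assumes "continuous_archimedean_tnorm T" "c \<in> {0..1}"
  shows "continuous_on {0..1} (T c)"
proof -
  have C: "continuous_on ({0..1} \<times> {0..1}) (\<lambda>p. T (fst p) (snd p))"
    using assms(1) unfolding continuous_archimedean_tnorm_def by blast
  have "continuous_on {0..1::real} (\<lambda>z. (\<lambda>p. T (fst p) (snd p)) (c, z))"
    apply (rule continuous_on_compose2[OF C])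
    using assms(2) by (auto intro!: continuous_intros)
  then show ?thesis by simp
qed

lemma key:
  assumes CA: "continuous_archimedean_tnorm T"
    and a: "a \<in> {0..1}" and s: "s \<in> {0..1}" and t: "t \<in> {0..1}"
    and st: "s < t" and eq: "T a s = T a t"
  shows "T a s = 0"
proof (rule ccontr)
  assume nz: "T a s \<noteq> 0"
  have tn: "tnorm T" using CA unfolding continuous_archimedean_tnorm_def by blast
  have arch: "\<forall>x\<in>{0<..<1}. T x x < x" using CA unfolding continuous_archimedean_tnorm_def by blast
  obtain z where z: "0 \<le> z" "z \<le> 1" "T t z = s"
    using IVT'[of "T t" 0 s 1] tn_zero2[OF tn t] tn_one[OF tn t] s st cont2[OF CA t] by auto
  define c where "c = T a t"
  have c01: "c \<in> {0..1}" using tn_range[OF tn a t] c_def by simp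
  have cz: "T c z = c"
    using tn_assoc[OF tn a t, of z] z eq c_def by auto
  have z1: "z \<noteq> 1" using z tn_one[OF tn t] st by auto
  define Z where "Z = {x \<in> {0..1::real}. T c x = c}"
  have clZ: "closed Z" unfolding Z_def
    by (rule continuous_closed_preimage_constant[OF cont2[OF CA c01]]) auto
  have zZ: "z \<in> Z" using z cz Z_def by auto
  have bb: "bdd_below Z" unfolding Z_def bdd_below_def by auto
  define z0 where "z0 = Inf Z"
  have z0Z: "z0 \<in> Z" unfolding z0_def using closed_contains_Inf[OF _ bb clZ] zZ by blast
  have z0le: "z0 \<le> z" unfolding z0_def using cInf_lower[OF zZ bb] .
  have z001: "z0 \<in> {0..1}" using z0Z Z_def by auto
  have Tc: "T c z0 = c" using z0Z Z_def by auto
  have sq: "T z0 z0 \<in> Z"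
  proof -
    have "T c (T z0 z0) = T (T c z0) z0" using tn_assoc[OF tn c01 z001 z001] .
    also have "\<dots> = c" using Tc by simp
    finally show ?thesis using tn_range[OF tn z001 z001] Z_def by auto
  qed
  have "z0 \<le> T z0 z0" unfolding z0_def using cInf_lower[OF sq bb] z0_def by simp
  moreover have "z0 < 1" using z0le z z1 by auto
  ultimately have "z0 = 0"
  proof -
    assume a1: "z0 \<le> T z0 z0" and a2: "z0 < 1"
    show "z0 = 0"
    proof (rule ccontr)
      assume "z0 \<noteq> 0"
      then have "z0 \<in> {0<..<1}" using z001 a2 by auto
      then have "T z0 z0 < z0" using arch by blast
      then show False using a1 by linarith
    qed
  qed
  then have "c = 0" using Tc tn_zero2[OF tn c01] by simp
  then show False using nz eq c_def by simp
qed

lemma cont_f: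
  assumes CA: "continuous_archimedean_tnorm T" and a: "a \<in> {0..1}" and a': "a' \<in> {0..1}"
  shows "continuous_on {0..1} (\<lambda>t. max (T a t) (T a' (1 - t)))"
proof -
  have c1: "continuous_on {0..1} (T a)" using cont2[OF CA a] .
  have c2: "continuous_on {0..1::real} (\<lambda>t. T a' (1 - t))"
    by (rule continuous_on_compose2[OF cont2[OF CA a']]) (auto intro!: continuous_intros)
  show ?thesis using continuous_on_max[OF c1 c2] by simp
qed

lemma closed_I:
  assumes CA: "continuous_archimedean_tnorm T" and a: "a \<in> {0..1}" and a': "a' \<in> {0..1}"
  shows "closed {t\<in>{0..1::real}. max (T a t) (T a' (1 - t)) \<le> c}"
proof -
  have "{t\<in>{0..1::real}. max (T a t) (T a' (1 - t)) \<le> c} = {0..1} \<inter> (\<lambda>t. max (T a t) (T a' (1 - t))) -` {..c}"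
    by auto
  moreover have "closed ({0..1} \<inter> (\<lambda>t. max (T a t) (T a' (1 - t))) -` {..c})"
    by (rule continuous_closed_preimage[OF cont_f[OF CA a a']]) auto
  ultimately show ?thesis by simp
qed

theorem corollary4:
  fixes T :: "real \<Rightarrow> real \<Rightarrow> real"
    and Ap Am :: "nat \<Rightarrow> nat \<Rightarrow> real" and b :: "nat \<Rightarrow> real"
    and m n i j :: nat
  assumes "continuous_archimedean_tnorm T"
    and "\<forall>i\<in>{1..m}. \<forall>j\<in>{1..n}. Ap i j \<in> {0..1} \<and> Am i j \<in> {0..1}"
    and "\<forall>i\<in>{1..m}. b i \<in> {0..1}"
    and "i \<in> {1..m}" and "j \<in> {1..n}"
    and "S'_set T Ap Am b m i j \<noteq> {}"
  shows "\<exists>L U. L \<le> U \<and> Ij_set T Ap Am b m j = {L..U} \<and>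
           (S'_set T Ap Am b m i j = {L} \<or> S'_set T Ap Am b m i j = {U} \<or>
            S'_set T Ap Am b m i j = {L, U} \<or> S'_set T Ap Am b m i j = {L..U})"
proof -
  note CA = assms(1)
  have tn: "tnorm T" using CA unfolding continuous_archimedean_tnorm_def by blast
  define I where "I = Ij_set T Ap Am b m j"
  define S where "S = S'_set T Ap Am b m i j"
  have memI: "t \<in> I \<longleftrightarrow> t \<in> {0..1} \<and> (\<forall>k\<in>{1..m}. max (T (Ap k j) t) (T (Am k j) (1 - t)) \<le> b k)" for t
    unfolding I_def Ij_set_def I_set_def using assms(4) by auto
  have memS: "t \<in> S \<longleftrightarrow> t \<in> I \<and> max (T (Ap i j) t) (T (Am i j) (1 - t)) = b i" for t
    unfolding S_def S'_set_def I_def[symmetric] S_set_def using memI by auto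
  have clI: "closed I"
  proof -
    have "I = (\<Inter>k\<in>{1..m}. {t\<in>{0..1::real}. max (T (Ap k j) t) (T (Am k j) (1 - t)) \<le> b k})"
      unfolding I_def Ij_set_def I_set_def by simp
    moreover have "closed (\<Inter>k\<in>{1..m}. {t\<in>{0..1::real}. max (T (Ap k j) t) (T (Am k j) (1 - t)) \<le> b k})"
      using closed_I[OF CA] assms(2,5) by (intro closed_INT) auto
    ultimately show ?thesis by simp
  qed
  have Ine: "I \<noteq> {}" using assms(6) memS S_def by blast
  have bbI: "bdd_below I" "bdd_above I" using memI unfolding bdd_below_def bdd_above_def by auto
  have conv: "y \<in> I" if "x \<in> I" "z \<in> I" "x \<le> y" "y \<le> z" for x y z
  proof -
    have x01: "x \<in> {0..1}" and z01: "z \<in> {0..1}" using that memI by auto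
    have y01: "y \<in> {0..1}" using x01 z01 that by auto
    have "max (T (Ap k j) y) (T (Am k j) (1 - y)) \<le> b k" if k: "k \<in> {1..m}" for k
    proof -
      have a: "Ap k j \<in> {0..1}" and a': "Am k j \<in> {0..1}" using assms(2,5) k by auto
      have "T (Ap k j) y \<le> T (Ap k j) z" using tn_mono[OF tn a y01 z01] \<open>y \<le> z\<close> .
      moreover have "T (Am k j) (1 - y) \<le> T (Am k j) (1 - x)"
        using tn_mono[OF tn a', of "1 - y" "1 - x"] \<open>x \<le> y\<close> x01 y01 by auto
      moreover have "max (T (Ap k j) z) (T (Am k j) (1 - z)) \<le> b k"
        "max (T (Ap k j) x) (T (Am k j) (1 - x)) \<le> b k" using that memI k \<open>x \<in> I\<close> \<open>z \<in> I\<close> by auto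
      ultimately show ?thesis by linarith
    qed
    then show ?thesis using memI y01 by auto
  qed
  define L where "L = Inf I"
  define U where "U = Sup I"
  have LI: "L \<in> I" unfolding L_def using closed_contains_Inf[OF Ine bbI(1) clI] .
  have UI: "U \<in> I" unfolding U_def using closed_contains_Sup[OF Ine bbI(2) clI] .
  have IL: "I = {L..U}"
  proof
    show "I \<subseteq> {L..U}" unfolding L_def U_def using cInf_lower[OF _ bbI(1)] cSup_upper[OF _ bbI(2)] by auto
    show "{L..U} \<subseteq> I"
    proof
      fix t assume "t \<in> {L..U}"
      then have "L \<le> t" "t \<le> U" by auto
      then show "t \<in> I" using conv[OF LI UI] by blast
    qed
  qed
  have LU: "L \<le> U" using IL Ine by auto
  have a: "Ap i j \<in> {0..1}" and a': "Am i j \<in> {0..1}" and b01: "b i \<in> {0..1}"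
    using assms(2,3,4,5) by auto
  have "S = {L} \<or> S = {U} \<or> S = {L, U} \<or> S = {L..U}"
  proof (cases "b i = 0")
    case True
    have "S = {L..U}"
    proof
      show "S \<subseteq> {L..U}" using memS IL by auto
      show "{L..U} \<subseteq> S"
      proof
        fix t assume t: "t \<in> {L..U}"
        then have tI: "t \<in> I" using IL by simp
        then have t01: "t \<in> {0..1}" using memI by auto
        have "max (T (Ap i j) t) (T (Am i j) (1 - t)) \<le> b i" using tI memI assms(4) by auto
        moreover have "T (Ap i j) t \<ge> 0" using tn_range[OF tn a t01] by auto
        ultimately have "max (T (Ap i j) t) (T (Am i j) (1 - t)) = b i" using True by linarith
        then show "t \<in> S" using memS tI by auto
      qed
    qed
    then show ?thesis by simp
  next
    case False
    then have bpos: "b i > 0" using b01 by auto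
    have sub: "S \<subseteq> {L, U}"
    proof
      fix t assume tS: "t \<in> S"
      then have tI: "t \<in> I" and eqt: "max (T (Ap i j) t) (T (Am i j) (1 - t)) = b i" using memS by auto
      have t01: "t \<in> {0..1}" using tI memI by auto
      have L01: "L \<in> {0..1}" and U01: "U \<in> {0..1}" using LI UI memI by auto
      have bU: "max (T (Ap i j) U) (T (Am i j) (1 - U)) \<le> b i" using UI memI assms(4) by auto
      have bL: "max (T (Ap i j) L) (T (Am i j) (1 - L)) \<le> b i" using LI memI assms(4) by auto
      have tLU: "L \<le> t" "t \<le> U" using tI IL by auto
      show "t \<in> {L, U}"
      proof (rule ccontr)
        assume "t \<notin> {L, U}"
        then have lt: "L < t" "t < U" using tLU by auto
        show False
        proof (cases "T (Ap i j) t = b i")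
          case True
          have "T (Ap i j) t \<le> T (Ap i j) U" using tn_mono[OF tn a t01 U01] lt by auto
          then have "T (Ap i j) t = T (Ap i j) U" using True bU by linarith
          then have "T (Ap i j) t = 0" using key[OF CA a t01 U01 lt(2)] by blast
          then show False using True bpos by simp
        next
          case False
          then have h: "T (Am i j) (1 - t) = b i" using eqt by (auto simp: max_def split: if_splits)
          have "T (Am i j) (1 - t) \<le> T (Am i j) (1 - L)" using tn_mono[OF tn a', of "1 - t" "1 - L"] lt t01 L01 by auto
          then have "T (Am i j) (1 - t) = T (Am i j) (1 - L)" using h bL by linarith
          then have "T (Am i j) (1 - t) = 0" using key[OF CA a', of "1 - t" "1 - L"] lt t01 L01 by auto
          then show False using h bpos by simp
        qed
      qed
    qed
    have "S \<noteq> {}" using assms(6) S_def by simp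
    then show ?thesis using sub by blast
  qed
  then show ?thesis using LU IL unfolding S_def I_def by blast
qed

end
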